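(* Let $G$ be a graph, $U\subseteq V(G)$, and let $P$ be a path $v\,v_2\,v_3\,v_4$ on four new vertices (so $P\cong P_4$ and $v$ is an end vertex). Let $H$ be the graph with $V(H)=V(G)\cup V(P)$ and $E(H)=E(G)\cup E(P)\cup\{uv: u\in U\}$. Then $\overline{H}$ is $N$-AW if and only if $\overline{G\cup P_4}$ is $N$-AW (where $G\cup P_4$ is the disjoint union of $G$ and $P$).
   Context: All graphs are finite and simple; $\overline{X}$ denotes the complement. Labels lie in $\mathbb{Z}_\ell$ for a fixed integer $\ell\ge2$. In the neighborhood Lights Out game on a graph, toggling a vertex $w$ adds $1$ (mod $\ell$) to the label of every vertex in the closed neighborhood $N[w]$; the game is won when all labels are $0$. A graph is $N$-AW if this game can be won from every initial labeling. *)

theory Defs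
  imports Main
begin

definition simple_graph :: "'a set \<Rightarrow> ('a \<Rightarrow> 'a \<Rightarrow> bool) \<Rightarrow> bool" where
  "simple_graph V E \<longleftrightarrow> finite V \<and> (\<forall>u w. E u w \<longrightarrow> u \<in> V \<and> w \<in> V \<and> E w u) \<and> (\<forall>u. \<not> E u u)"

definition compl_edges :: "'a set \<Rightarrow> ('a \<Rightarrow> 'a \<Rightarrow> bool) \<Rightarrow> 'a \<Rightarrow> 'a \<Rightarrow> bool" where
  "compl_edges V E u w \<longleftrightarrow> u \<in> V \<and> w \<in> V \<and> u \<noteq> w \<and> \<not> E u w"

definition closed_nbhd :: "'a set \<Rightarrow> ('a \<Rightarrow> 'a \<Rightarrow> bool) \<Rightarrow> 'a \<Rightarrow> 'a set" where
  "closed_nbhd V E w = {u \<in> V. u = w \<or> E w u}"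

text \<open>N-AW over Z_l: from every initial labeling (labels in {0..<l}) there is a
  choice of toggle counts x w (toggling w adds 1 mod l to every vertex of N[w])
  making all labels 0 mod l.\<close>
definition N_AW :: "nat \<Rightarrow> 'a set \<Rightarrow> ('a \<Rightarrow> 'a \<Rightarrow> bool) \<Rightarrow> bool" where
  "N_AW l V E \<longleftrightarrow>
     (\<forall>c :: 'a \<Rightarrow> nat. (\<forall>u\<in>V. c u < l) \<longrightarrow>
        (\<exists>x :: 'a \<Rightarrow> nat. \<forall>u\<in>V.
            (c u + (\<Sum>w\<in>V. if u \<in> closed_nbhd V E w then x w else 0)) mod l = 0))"

text \<open>The path P = v v2 v3 v4 on vertices 1,2,3,4 (v = 1).\<close>
definition P4_verts :: "nat set" where "P4_verts = {1,2,3,4}"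
definition P4_edges :: "nat \<Rightarrow> nat \<Rightarrow> bool" where
  "P4_edges i j \<longleftrightarrow> (i,j) \<in> {(1,2),(2,1),(2,3),(3,2),(3,4),(4,3)}"

definition dunion_verts :: "'a set \<Rightarrow> ('a + nat) set" where
  "dunion_verts V = Inl ` V \<union> Inr ` P4_verts"
definition dunion_edges :: "('a \<Rightarrow> 'a \<Rightarrow> bool) \<Rightarrow> ('a + nat) \<Rightarrow> ('a + nat) \<Rightarrow> bool" where
  "dunion_edges E x y = (case (x, y) of
       (Inl a, Inl b) \<Rightarrow> E a b
     | (Inr i, Inr j) \<Rightarrow> P4_edges i j
     | _ \<Rightarrow> False)"

definition H_edges :: "('a \<Rightarrow> 'a \<Rightarrow> bool) \<Rightarrow> 'a set \<Rightarrow> ('a + nat) \<Rightarrow> ('a + nat) \<Rightarrow> bool" where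
  "H_edges E U x y \<longleftrightarrow> dunion_edges E x y
      \<or> (x = Inr 1 \<and> y \<in> Inl ` U) \<or> (y = Inr 1 \<and> x \<in> Inl ` U)"

end

theory Submission
  imports Defs
begin

lemma N_AW_int:
  assumes "l > 0"
  shows "N_AW l V E \<longleftrightarrow> (\<forall>c :: 'a \<Rightarrow> int. \<exists>x :: 'a \<Rightarrow> int. \<forall>u\<in>V.
     int l dvd (c u + (\<Sum>w\<in>V. if u \<in> closed_nbhd V E w then x w else 0)))"
proof
  assume N: "N_AW l V E"
  show "\<forall>c :: 'a \<Rightarrow> int. \<exists>x :: 'a \<Rightarrow> int. \<forall>u\<in>V.
     int l dvd (c u + (\<Sum>w\<in>V. if u \<in> closed_nbhd V E w then x w else 0))"
  proof
    fix c :: "'a \<Rightarrow> int"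
    define c' where "c' u = nat (c u mod int l)" for u
    have "\<forall>u\<in>V. c' u < l" unfolding c'_def using assms
      by (simp add: nat_less_iff)
    then obtain x :: "'a \<Rightarrow> nat" where x: "\<forall>u\<in>V.
            (c' u + (\<Sum>w\<in>V. if u \<in> closed_nbhd V E w then x w else 0)) mod l = 0"
      using N unfolding N_AW_def by blast
    show "\<exists>x :: 'a \<Rightarrow> int. \<forall>u\<in>V.
     int l dvd (c u + (\<Sum>w\<in>V. if u \<in> closed_nbhd V E w then x w else 0))"
    proof (intro exI[of _ "\<lambda>w. int (x w)"] ballI)
      fix u assume u: "u \<in> V"
      have "l dvd (c' u + (\<Sum>w\<in>V. if u \<in> closed_nbhd V E w then x w else 0))"
        using x u by auto
      then have "int l dvd int (c' u + (\<Sum>w\<in>V. if u \<in> closed_nbhd V E w then x w else 0))"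
        by (simp only: int_dvd_int_iff)
      moreover have "int (c' u + (\<Sum>w\<in>V. if u \<in> closed_nbhd V E w then x w else 0))
         = c u mod int l + (\<Sum>w\<in>V. if u \<in> closed_nbhd V E w then int (x w) else 0)"
        proof -
        have pw: "int (if u \<in> closed_nbhd V E w then x w else 0) = (if u \<in> closed_nbhd V E w then int (x w) else 0)" for w
          by simp
        have "int (c' u) = c u mod int l" unfolding c'_def using assms by simp
        then show ?thesis by (simp only: of_nat_add of_nat_sum pw)
      qed
      ultimately have "int l dvd (c u mod int l + (\<Sum>w\<in>V. if u \<in> closed_nbhd V E w then int (x w) else 0))"
        by (simp only:)
      then show "int l dvd (c u + (\<Sum>w\<in>V. if u \<in> closed_nbhd V E w then int (x w) else 0))"
        by (simp only: dvd_eq_mod_eq_0 mod_add_left_eq)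
    qed
  qed
next
  assume I: "\<forall>c :: 'a \<Rightarrow> int. \<exists>x :: 'a \<Rightarrow> int. \<forall>u\<in>V.
     int l dvd (c u + (\<Sum>w\<in>V. if u \<in> closed_nbhd V E w then x w else 0))"
  show "N_AW l V E"
    unfolding N_AW_def
  proof (intro allI impI)
    fix c :: "'a \<Rightarrow> nat"
    obtain x :: "'a \<Rightarrow> int" where x: "\<forall>u\<in>V.
     int l dvd (int (c u) + (\<Sum>w\<in>V. if u \<in> closed_nbhd V E w then x w else 0))"
      using spec[OF I, of "\<lambda>u. int (c u)"] by blast
    define x' where "x' w = nat (x w mod int l)" for w
    show "\<exists>x :: 'a \<Rightarrow> nat. \<forall>u\<in>V.
            (c u + (\<Sum>w\<in>V. if u \<in> closed_nbhd V E w then x w else 0)) mod l = 0"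
    proof (intro exI[of _ x'] ballI)
      fix u assume u: "u \<in> V"
      have e: "int (c u + (\<Sum>w\<in>V. if u \<in> closed_nbhd V E w then x' w else 0))
        = int (c u) + (\<Sum>w\<in>V. (if u \<in> closed_nbhd V E w then x w else 0) mod int l)"
        proof -
        have pw: "int (if u \<in> closed_nbhd V E w then x' w else 0) = (if u \<in> closed_nbhd V E w then x w else 0) mod int l" for w
          unfolding x'_def using assms by simp
        show ?thesis by (simp only: of_nat_add of_nat_sum pw)
      qed
      have "(int (c u) + (\<Sum>w\<in>V. (if u \<in> closed_nbhd V E w then x w else 0) mod int l)) mod int l
         = (int (c u) + (\<Sum>w\<in>V. (if u \<in> closed_nbhd V E w then x w else 0))) mod int l"
        by (rule mod_add_cong[OF refl mod_sum_eq])
      also have "\<dots> = 0" using x u by (simp only: dvd_eq_mod_eq_0[symmetric])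
      finally have "int l dvd int (c u + (\<Sum>w\<in>V. if u \<in> closed_nbhd V E w then x' w else 0))"
        using e by (simp only: dvd_eq_mod_eq_0)
      then show "(c u + (\<Sum>w\<in>V. if u \<in> closed_nbhd V E w then x' w else 0)) mod l = 0"
        unfolding int_dvd_int_iff by (simp only: dvd_eq_mod_eq_0[symmetric])
    qed
  qed
qed

lemma sum_D:
  assumes "finite V"
  shows "(\<Sum>w\<in>dunion_verts V. f w) = (\<Sum>a\<in>V. f (Inl a)) + f (Inr 1) + f (Inr 2) + f (Inr 3) + f (Inr 4)"
proof -
  have "(\<Sum>w\<in>dunion_verts V. f w) = (\<Sum>w\<in>Inl ` V. f w) + (\<Sum>w\<in>Inr ` P4_verts. f w)"
    unfolding dunion_verts_def using assms
    by (intro sum.union_disjoint) (auto simp: P4_verts_def)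
  also have "(\<Sum>w\<in>Inl ` V. f w) = (\<Sum>a\<in>V. f (Inl a))"
    by (simp add: sum.reindex)
  also have "(\<Sum>w\<in>Inr ` P4_verts. f w) = f (Inr 1) + f (Inr 2) + f (Inr 3) + f (Inr 4)"
    by (simp add: sum.reindex P4_verts_def add.assoc)
  finally show ?thesis by (simp add: add.assoc)
qed

lemma mem_cn:
  assumes "u \<in> D" "w \<in> D"
  shows "u \<in> closed_nbhd D (compl_edges D EE) w \<longleftrightarrow> (u = w \<or> \<not> EE w u)"
  using assms unfolding closed_nbhd_def compl_edges_def by auto

lemma row_Inl:
  fixes x :: "'a + nat \<Rightarrow> int"
  assumes "finite V" "g \<in> V"
  shows "(\<Sum>w\<in>dunion_verts V. if Inl g \<in> closed_nbhd (dunion_verts V) (compl_edges (dunion_verts V) EE) w then x w else 0)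
    = (\<Sum>a\<in>V. if g = a \<or> \<not> EE (Inl a) (Inl g) then x (Inl a) else 0)
      + (if \<not> EE (Inr 1) (Inl g) then x (Inr 1) else 0)
      + (if \<not> EE (Inr 2) (Inl g) then x (Inr 2) else 0)
      + (if \<not> EE (Inr 3) (Inl g) then x (Inr 3) else 0)
      + (if \<not> EE (Inr 4) (Inl g) then x (Inr 4) else 0)"
proof -
  have D: "Inl a \<in> dunion_verts V" if "a \<in> V" for a using that by (simp add: dunion_verts_def)
  have R: "Inr i \<in> dunion_verts V" if "i \<in> {1,2,3,4}" for i using that by (auto simp: dunion_verts_def P4_verts_def)
  show ?thesis
    unfolding sum_D[OF assms(1)]
    using mem_cn[OF D[OF assms(2)] D] mem_cn[OF D[OF assms(2)] R]
    by (auto intro!: sum.cong)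
qed

lemma row_Inr:
  fixes x :: "'a + nat \<Rightarrow> int"
  assumes "finite V" "j \<in> {1,2,3,4}"
  shows "(\<Sum>w\<in>dunion_verts V. if Inr j \<in> closed_nbhd (dunion_verts V) (compl_edges (dunion_verts V) EE) w then x w else 0)
    = (\<Sum>a\<in>V. if \<not> EE (Inl a) (Inr j) then x (Inl a) else 0)
      + (if j = 1 \<or> \<not> EE (Inr 1) (Inr j) then x (Inr 1) else 0)
      + (if j = 2 \<or> \<not> EE (Inr 2) (Inr j) then x (Inr 2) else 0)
      + (if j = 3 \<or> \<not> EE (Inr 3) (Inr j) then x (Inr 3) else 0)
      + (if j = 4 \<or> \<not> EE (Inr 4) (Inr j) then x (Inr 4) else 0)"
proof -
  have D: "Inl a \<in> dunion_verts V" if "a \<in> V" for a using that by (simp add: dunion_verts_def)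
  have R: "Inr i \<in> dunion_verts V" if "i \<in> {1,2,3,4}" for i using that by (auto simp: dunion_verts_def P4_verts_def)
  show ?thesis
    unfolding sum_D[OF assms(1)]
    using mem_cn[OF R[OF assms(2)] D] mem_cn[OF R[OF assms(2)] R]
    by (auto intro!: sum.cong)
qed


definition QQ :: "nat \<Rightarrow> 'a set \<Rightarrow> ('a \<Rightarrow> 'a \<Rightarrow> bool) \<Rightarrow> bool" where
  "QQ l V E \<longleftrightarrow> (\<forall>d :: 'a \<Rightarrow> int. \<exists>y :: 'a \<Rightarrow> int. \<forall>g\<in>V.
     int l dvd (d g + (\<Sum>a\<in>V. if g = a \<or> \<not> E a g then y a else 0) - 2 * (\<Sum>a\<in>V. y a)))"

lemma K_iff:
  assumes fin: "finite V"
  shows "(\<forall>c :: 'a + nat \<Rightarrow> int. \<exists>x :: 'a + nat \<Rightarrow> int. \<forall>u\<in>dunion_verts V.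
     int l dvd (c u + (\<Sum>w\<in>dunion_verts V. if u \<in> closed_nbhd (dunion_verts V) (compl_edges (dunion_verts V) (dunion_edges E)) w then x w else 0)))
     \<longleftrightarrow> QQ l V E"
    (is "(\<forall>c. \<exists>x. \<forall>u\<in>?D. ?P c x u) \<longleftrightarrow> _")
proof
  assume A: "\<forall>c. \<exists>x. \<forall>u\<in>?D. ?P c x u"
  show "QQ l V E" unfolding QQ_def
  proof
    fix d :: "'a \<Rightarrow> int"
    obtain x where x: "\<forall>u\<in>?D. ?P (case_sum d (\<lambda>_. 0)) x u"
      using spec[OF A, of "case_sum d (\<lambda>_. 0)"] by blast
    show "\<exists>y :: 'a \<Rightarrow> int. \<forall>g\<in>V.
     int l dvd (d g + (\<Sum>a\<in>V. if g = a \<or> \<not> E a g then y a else 0) - 2 * (\<Sum>a\<in>V. y a))"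
    proof (intro exI[of _ "\<lambda>a. x (Inl a)"] ballI)
      fix g assume g: "g \<in> V"
      have mV: "Inl g \<in> ?D" using g by (simp add: dunion_verts_def)
      have eV: "int l dvd (d g + ((\<Sum>a\<in>V. if g = a \<or> \<not> E a g then x (Inl a) else 0)
          + x (Inr 1) + x (Inr 2) + x (Inr 3) + x (Inr 4)))"
        using bspec[OF x mV] row_Inl[OF fin g, of "dunion_edges E" x] by (simp add: dunion_edges_def)
      have m2: "Inr 2 \<in> ?D" by (simp add: dunion_verts_def P4_verts_def)
      have e2: "int l dvd ((\<Sum>a\<in>V. x (Inl a)) + x (Inr 2) + x (Inr 4))"
        using bspec[OF x m2] row_Inr[OF fin, of 2 "dunion_edges E" x] by (simp add: dunion_edges_def P4_edges_def)
      have m3: "Inr 3 \<in> ?D" by (simp add: dunion_verts_def P4_verts_def)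
      have e3: "int l dvd ((\<Sum>a\<in>V. x (Inl a)) + x (Inr 1) + x (Inr 3))"
        using bspec[OF x m3] row_Inr[OF fin, of 3 "dunion_edges E" x] by (simp add: dunion_edges_def P4_edges_def)
      have "int l dvd (d g + ((\<Sum>a\<in>V. if g = a \<or> \<not> E a g then x (Inl a) else 0)
          + x (Inr 1) + x (Inr 2) + x (Inr 3) + x (Inr 4)) - ((\<Sum>a\<in>V. x (Inl a)) + x (Inr 2) + x (Inr 4))
          - ((\<Sum>a\<in>V. x (Inl a)) + x (Inr 1) + x (Inr 3)))"
        using eV e2 e3 by (intro dvd_diff)
      then show "int l dvd (d g + (\<Sum>a\<in>V. if g = a \<or> \<not> E a g then x (Inl a) else 0) - 2 * (\<Sum>a\<in>V. x (Inl a)))"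
        by (simp add: algebra_simps)
    qed
  qed
next
  assume Q: "QQ l V E"
  show "\<forall>c. \<exists>x. \<forall>u\<in>?D. ?P c x u"
  proof
    fix c :: "'a + nat \<Rightarrow> int"
    obtain y where y: "\<forall>g\<in>V. int l dvd ((c (Inl g) - c (Inr 2) - c (Inr 3)) + (\<Sum>a\<in>V. if g = a \<or> \<not> E a g then y a else 0) - 2 * (\<Sum>a\<in>V. y a))"
      using spec[OF Q[unfolded QQ_def], of "\<lambda>g. c (Inl g) - c (Inr 2) - c (Inr 3)"] by blast
    define S where "S = (\<Sum>a\<in>V. y a)"
    define x1 where "x1 = c (Inr 2) - c (Inr 4)"
    define x4 where "x4 = c (Inr 3) - c (Inr 1)"
    define x2 where "x2 = - c (Inr 2) - S - x4"
    define x3 where "x3 = - c (Inr 3) - S - x1"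
    define x where "x = case_sum y (\<lambda>i::nat. if i = 1 then x1 else if i = 2 then x2 else if i = 3 then x3 else x4)"
    have xs: "x (Inl a) = y a" "x (Inr 1) = x1" "x (Inr (Suc 0)) = x1" "x (Inr 2) = x2" "x (Inr 3) = x3" "x (Inr 4) = x4" for a
      by (simp_all add: x_def)
    show "\<exists>x. \<forall>u\<in>?D. ?P c x u"
    proof (intro exI[of _ x] ballI)
      fix u assume u: "u \<in> ?D"
      then consider (L) g where "u = Inl g" "g \<in> V" | (R) j where "u = Inr j" "j \<in> {1,2,3,4}"
        unfolding dunion_verts_def P4_verts_def by blast
      then show "?P c x u"
      proof cases
        case (L g)
        have r: "(\<Sum>w\<in>?D. if Inl g \<in> closed_nbhd ?D (compl_edges ?D (dunion_edges E)) w then x w else 0)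
          = (\<Sum>a\<in>V. if g = a \<or> \<not> E a g then y a else 0) + x1 + x2 + x3 + x4"
          using row_Inl[OF fin L(2), of "dunion_edges E" x] by (simp add: dunion_edges_def xs cong: if_cong)
        have e: "c (Inl g) + ((\<Sum>a\<in>V. if g = a \<or> \<not> E a g then y a else 0) + x1 + x2 + x3 + x4)
          = (c (Inl g) - c (Inr 2) - c (Inr 3)) + (\<Sum>a\<in>V. if g = a \<or> \<not> E a g then y a else 0) - 2 * S"
          unfolding x1_def x2_def x3_def x4_def by simp
        show ?thesis unfolding L(1) r e using y L(2) S_def by simp
      next
        case R
        then show ?thesis
          using row_Inr[OF fin R(2), of "dunion_edges E" x]
          by (auto simp add: dunion_edges_def P4_edges_def xs x1_def x2_def x3_def x4_def S_def algebra_simps)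
      qed
    qed
  qed
qed

lemma H_iff:
  assumes fin: "finite V"
  shows "(\<forall>c :: 'a + nat \<Rightarrow> int. \<exists>x :: 'a + nat \<Rightarrow> int. \<forall>u\<in>dunion_verts V.
     int l dvd (c u + (\<Sum>w\<in>dunion_verts V. if u \<in> closed_nbhd (dunion_verts V) (compl_edges (dunion_verts V) (H_edges E U)) w then x w else 0)))
     \<longleftrightarrow> QQ l V E"
    (is "(\<forall>c. \<exists>x. \<forall>u\<in>?D. ?P c x u) \<longleftrightarrow> _")
proof
  assume A: "\<forall>c. \<exists>x. \<forall>u\<in>?D. ?P c x u"
  show "QQ l V E" unfolding QQ_def
  proof
    fix d :: "'a \<Rightarrow> int"
    obtain x where x: "\<forall>u\<in>?D. ?P (case_sum d (\<lambda>_. 0)) x u"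
      using spec[OF A, of "case_sum d (\<lambda>_. 0)"] by blast
    show "\<exists>y :: 'a \<Rightarrow> int. \<forall>g\<in>V.
     int l dvd (d g + (\<Sum>a\<in>V. if g = a \<or> \<not> E a g then y a else 0) - 2 * (\<Sum>a\<in>V. y a))"
    proof (intro exI[of _ "\<lambda>a. x (Inl a)"] ballI)
      fix g assume g: "g \<in> V"
      have mV: "Inl g \<in> ?D" using g by (simp add: dunion_verts_def)
      have eV: "int l dvd (d g + ((\<Sum>a\<in>V. if g = a \<or> \<not> E a g then x (Inl a) else 0)
          + (if g \<notin> U then x (Inr 1) else 0) + x (Inr 2) + x (Inr 3) + x (Inr 4)))"
        using bspec[OF x mV] row_Inl[OF fin g, of "H_edges E U" x]
        by (simp add: H_edges_def dunion_edges_def image_iff)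
      have m2: "Inr 2 \<in> ?D" by (simp add: dunion_verts_def P4_verts_def)
      have e2: "int l dvd ((\<Sum>a\<in>V. x (Inl a)) + x (Inr 2) + x (Inr 4))"
        using bspec[OF x m2] row_Inr[OF fin, of 2 "H_edges E U" x]
        by (simp add: H_edges_def dunion_edges_def P4_edges_def image_iff)
      have m3: "Inr 3 \<in> ?D" by (simp add: dunion_verts_def P4_verts_def)
      have e3: "int l dvd ((\<Sum>a\<in>V. x (Inl a)) + x (Inr 1) + x (Inr 3))"
        using bspec[OF x m3] row_Inr[OF fin, of 3 "H_edges E U" x]
        by (simp add: H_edges_def dunion_edges_def P4_edges_def image_iff)
      have m4: "Inr 4 \<in> ?D" by (simp add: dunion_verts_def P4_verts_def)
      have e4: "int l dvd ((\<Sum>a\<in>V. x (Inl a)) + x (Inr 1) + x (Inr 2) + x (Inr 4))"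
        using bspec[OF x m4] row_Inr[OF fin, of 4 "H_edges E U" x]
        by (simp add: H_edges_def dunion_edges_def P4_edges_def image_iff)
      have "int l dvd (d g + ((\<Sum>a\<in>V. if g = a \<or> \<not> E a g then x (Inl a) else 0)
          + (if g \<notin> U then x (Inr 1) else 0) + x (Inr 2) + x (Inr 3) + x (Inr 4)) - ((\<Sum>a\<in>V. x (Inl a)) + x (Inr 2) + x (Inr 4))
          - ((\<Sum>a\<in>V. x (Inl a)) + x (Inr 1) + x (Inr 3))
          + (if g \<in> U then 1 else 0) * (((\<Sum>a\<in>V. x (Inl a)) + x (Inr 1) + x (Inr 2) + x (Inr 4)) - ((\<Sum>a\<in>V. x (Inl a)) + x (Inr 2) + x (Inr 4))))"
        by (rule dvd_add[OF dvd_diff[OF dvd_diff[OF eV e2] e3] dvd_mult[OF dvd_diff[OF e4 e2]]])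
      then show "int l dvd (d g + (\<Sum>a\<in>V. if g = a \<or> \<not> E a g then x (Inl a) else 0) - 2 * (\<Sum>a\<in>V. x (Inl a)))"
        by (cases "g \<in> U") (simp_all add: algebra_simps)
    qed
  qed
next
  assume Q: "QQ l V E"
  show "\<forall>c. \<exists>x. \<forall>u\<in>?D. ?P c x u"
  proof
    fix c :: "'a + nat \<Rightarrow> int"
    obtain y where y: "\<forall>g\<in>V. int l dvd ((c (Inl g) - c (Inr 2) - c (Inr 3) - (if g \<in> U then c (Inr 2) - c (Inr 4) else 0))
       + (\<Sum>a\<in>V. if g = a \<or> \<not> E a g then y a else 0) - 2 * (\<Sum>a\<in>V. y a))"
      using spec[OF Q[unfolded QQ_def], of "\<lambda>g. c (Inl g) - c (Inr 2) - c (Inr 3) - (if g \<in> U then c (Inr 2) - c (Inr 4) else 0)"] by blast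
    define S where "S = (\<Sum>a\<in>V. y a)"
    define S' where "S' = (\<Sum>a\<in>V. if a \<notin> U then y a else 0)"
    define x1 where "x1 = c (Inr 2) - c (Inr 4)"
    define x4 where "x4 = c (Inr 3) - c (Inr 1) + S - S'"
    define x2 where "x2 = - c (Inr 2) - S - x4"
    define x3 where "x3 = - c (Inr 3) - S - x1"
    define x where "x = case_sum y (\<lambda>i::nat. if i = 1 then x1 else if i = 2 then x2 else if i = 3 then x3 else x4)"
    have xs: "x (Inl a) = y a" "x (Inr 1) = x1" "x (Inr (Suc 0)) = x1" "x (Inr 2) = x2" "x (Inr 3) = x3" "x (Inr 4) = x4" for a
      by (simp_all add: x_def)
    show "\<exists>x. \<forall>u\<in>?D. ?P c x u"
    proof (intro exI[of _ x] ballI)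
      fix u assume u: "u \<in> ?D"
      then consider (L) g where "u = Inl g" "g \<in> V" | (R) j where "u = Inr j" "j \<in> {1,2,3,4}"
        unfolding dunion_verts_def P4_verts_def by blast
      then show "?P c x u"
      proof cases
        case (L g)
        have r: "(\<Sum>w\<in>?D. if Inl g \<in> closed_nbhd ?D (compl_edges ?D (H_edges E U)) w then x w else 0)
          = (\<Sum>a\<in>V. if g = a \<or> \<not> E a g then y a else 0) + (if g \<in> U then 0 else x1) + x2 + x3 + x4"
          using row_Inl[OF fin L(2), of "H_edges E U" x]
          by (simp add: H_edges_def dunion_edges_def image_iff xs cong: if_cong)
        have e: "c (Inl g) + ((\<Sum>a\<in>V. if g = a \<or> \<not> E a g then y a else 0) + (if g \<in> U then 0 else x1) + x2 + x3 + x4)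
          = (c (Inl g) - c (Inr 2) - c (Inr 3) - (if g \<in> U then c (Inr 2) - c (Inr 4) else 0)) + (\<Sum>a\<in>V. if g = a \<or> \<not> E a g then y a else 0) - 2 * S"
          unfolding x1_def x2_def x3_def x4_def by simp
        show ?thesis unfolding L(1) r e using y L(2) S_def by simp
      next
        case (R j)
        have j: "j = 1 \<or> j = 2 \<or> j = 3 \<or> j = 4" using R(2) by auto
        let ?r = "\<lambda>j. (\<Sum>w\<in>?D. if Inr j \<in> closed_nbhd ?D (compl_edges ?D (H_edges E U)) w then x w else 0)"
        have r1: "?r 1 = S' + x1 + x3 + x4"
          using row_Inr[OF fin, of 1 "H_edges E U" x] unfolding S'_def
          by (simp add: H_edges_def dunion_edges_def P4_edges_def image_iff xs cong: if_cong)
        have r2: "?r 2 = S + x2 + x4"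
          using row_Inr[OF fin, of 2 "H_edges E U" x] unfolding S_def
          by (simp add: H_edges_def dunion_edges_def P4_edges_def image_iff xs cong: if_cong)
        have r3: "?r 3 = S + x1 + x3"
          using row_Inr[OF fin, of 3 "H_edges E U" x] unfolding S_def
          by (simp add: H_edges_def dunion_edges_def P4_edges_def image_iff xs cong: if_cong)
        have r4: "?r 4 = S + x1 + x2 + x4"
          using row_Inr[OF fin, of 4 "H_edges E U" x] unfolding S_def
          by (simp add: H_edges_def dunion_edges_def P4_edges_def image_iff xs cong: if_cong)
        have z1: "c (Inr 1) + (S' + x1 + x3 + x4) = 0" unfolding x1_def x3_def x4_def by simp
        have z2: "c (Inr 2) + (S + x2 + x4) = 0" unfolding x2_def by simp
        have z3: "c (Inr 3) + (S + x1 + x3) = 0" unfolding x3_def by simp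
        have z4: "c (Inr 4) + (S + x1 + x2 + x4) = 0" unfolding x1_def x2_def by simp
        from j show ?thesis
          unfolding R(1) using r1 r2 r3 r4 z1 z2 z3 z4 by (elim disjE) simp_all
      qed
    qed
  qed
qed

theorem theorem3p1:
  fixes l :: nat and V U :: "'a set" and E :: "'a \<Rightarrow> 'a \<Rightarrow> bool"
  assumes "l \<ge> 2"
    and "simple_graph V E"
    and "U \<subseteq> V"
  shows "N_AW l (dunion_verts V) (compl_edges (dunion_verts V) (H_edges E U))
     \<longleftrightarrow> N_AW l (dunion_verts V) (compl_edges (dunion_verts V) (dunion_edges E))"
proof -
  have fin: "finite V" using assms(2) unfolding simple_graph_def by blast
  have l: "l > 0" using assms(1) by simp
  show ?thesis
    unfolding N_AW_int[OF l] H_iff[OF fin] K_iff[OF fin] ..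
qed

end
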